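(* Let $D$ be an oriented graph with $n$ vertices containing no transmitter. Then there exists an oriented graph $D_2$ containing $D$ as an induced suboriented graph such that the set of weak kings of $D_2$ is exactly the vertex set of $D$.
   Context: An oriented graph is a digraph with no loops and no pair of symmetric arcs. A transmitter is a vertex of indegree $0$. For vertices $u,v$ write $u(1\text{-}0)v$ if there is an arc from $u$ to $v$, and $u(0\text{-}0)v$ if there is no arc between $u$ and $v$. A vertex $v$ is weakly reachable within two steps from $u$ if $u(1\text{-}0)v$, or $u(0\text{-}0)v$, or for some vertex $w$ one has $u(1\text{-}0)w(1\text{-}0)v$, or $u(1\text{-}0)w(0\text{-}0)v$, or $u(0\text{-}0)w(1\text{-}0)v$. A vertex $u$ of an oriented graph is a weak king if every other vertex is weakly reachable within two steps from $u$. *)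

theory Defs
  imports Main
begin

definition oriented_graph :: "'a set \<Rightarrow> ('a \<times> 'a) set \<Rightarrow> bool" where
  "oriented_graph V A \<longleftrightarrow> finite V \<and> A \<subseteq> V \<times> V \<and> (\<forall>x. (x, x) \<notin> A)
     \<and> (\<forall>x y. (x, y) \<in> A \<longrightarrow> (y, x) \<notin> A)"

definition transmitter :: "'a set \<Rightarrow> ('a \<times> 'a) set \<Rightarrow> 'a \<Rightarrow> bool" where
  "transmitter V A v \<longleftrightarrow> v \<in> V \<and> (\<forall>u\<in>V. (u, v) \<notin> A)"

definition arc10 :: "('a \<times> 'a) set \<Rightarrow> 'a \<Rightarrow> 'a \<Rightarrow> bool" where
  "arc10 A u v \<longleftrightarrow> (u, v) \<in> A"

definition arc00 :: "('a \<times> 'a) set \<Rightarrow> 'a \<Rightarrow> 'a \<Rightarrow> bool" where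
  "arc00 A u v \<longleftrightarrow> (u, v) \<notin> A \<and> (v, u) \<notin> A"

definition weakly_reach2 :: "'a set \<Rightarrow> ('a \<times> 'a) set \<Rightarrow> 'a \<Rightarrow> 'a \<Rightarrow> bool" where
  "weakly_reach2 V A u v \<longleftrightarrow> arc10 A u v \<or> arc00 A u v \<or>
     (\<exists>w\<in>V. (arc10 A u w \<and> arc10 A w v) \<or> (arc10 A u w \<and> arc00 A w v)
            \<or> (arc00 A u w \<and> arc10 A w v))"

definition weak_king :: "'a set \<Rightarrow> ('a \<times> 'a) set \<Rightarrow> 'a \<Rightarrow> bool" where
  "weak_king V A u \<longleftrightarrow> u \<in> V \<and> (\<forall>v\<in>V. v \<noteq> u \<longrightarrow> weakly_reach2 V A u v)"

end

theory Submission
  imports Defs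
begin

theorem theorem10:
  fixes V :: "'a set" and A :: "('a \<times> 'a) set"
  assumes "oriented_graph V A"
    and "\<forall>v\<in>V. \<not> transmitter V A v"
  shows "\<exists>(V2 :: ('a + nat) set) A2.
           oriented_graph V2 A2
         \<and> Inl ` V \<subseteq> V2
         \<and> (\<forall>x\<in>V. \<forall>y\<in>V. (Inl x, Inl y) \<in> A2 \<longleftrightarrow> (x, y) \<in> A)
         \<and> {u \<in> V2. weak_king V2 A2 u} = Inl ` V"
proof -
  have og: "finite V" "A \<subseteq> V \<times> V" "\<And>x. (x, x) \<notin> A" "\<And>x y. (x, y) \<in> A \<Longrightarrow> (y, x) \<notin> A"
    using assms(1) unfolding oriented_graph_def by auto
  obtain f :: "'a \<Rightarrow> nat" where inj: "inj_on f V"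
    using finite_imp_inj_to_nat_seg[OF og(1)] by blast
  define V2 :: "('a + nat) set" where "V2 = Inl ` V \<union> Inr ` f ` V"
  define A2 :: "(('a + nat) \<times> ('a + nat)) set" where
    "A2 = {(Inl x, Inl y) | x y. (x, y) \<in> A} \<union> {(Inl x, Inr (f y)) | x y. x \<in> V \<and> y \<in> V \<and> x \<noteq> y}"
  have o2: "oriented_graph V2 A2"
    using og unfolding oriented_graph_def V2_def A2_def by blast
  have ind: "\<forall>x\<in>V. \<forall>y\<in>V. (Inl x, Inl y) \<in> A2 \<longleftrightarrow> (x, y) \<in> A"
    unfolding A2_def by auto
  have k1: "weak_king V2 A2 (Inl x)" if x: "x \<in> V" for x
    unfolding weak_king_def
  proof (intro conjI ballI impI)
    show "Inl x \<in> V2" using x V2_def by auto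
    fix v assume v: "v \<in> V2" "v \<noteq> Inl x"
    then consider (a) y where "y \<in> V" "v = Inl y" "y \<noteq> x" | (b) y where "y \<in> V" "v = Inr (f y)"
      unfolding V2_def by auto
    then show "weakly_reach2 V2 A2 (Inl x) v"
    proof cases
      case a
      have "Inr (f y) \<in> V2" using a V2_def by auto
      moreover have "arc10 A2 (Inl x) (Inr (f y))" using a x unfolding arc10_def A2_def by auto
      moreover have "arc00 A2 (Inr (f y)) (Inl y)" unfolding arc00_def A2_def using a inj by (auto dest: inj_onD)
      ultimately show ?thesis unfolding weakly_reach2_def using a by blast
    next
      case b
      show ?thesis
      proof (cases "y = x")
        case True
        have "arc00 A2 (Inl x) v" unfolding arc00_def A2_def using b True inj x
          by (auto dest: inj_onD)
        then show ?thesis unfolding weakly_reach2_def by blast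
      next
        case False
        have "arc10 A2 (Inl x) v" unfolding arc10_def A2_def using b False x by auto
        then show ?thesis unfolding weakly_reach2_def by blast
      qed
    qed
  qed
  have k2: "\<not> weak_king V2 A2 (Inr (f y))" if y: "y \<in> V" for y
  proof
    assume wk: "weak_king V2 A2 (Inr (f y))"
    obtain z where z: "z \<in> V" "(z, y) \<in> A"
      using assms(2) y unfolding transmitter_def by blast
    have zy: "z \<noteq> y" using z og(3) by auto
    have "Inl z \<in> V2" using z V2_def by auto
    then have "weakly_reach2 V2 A2 (Inr (f y)) (Inl z)" using wk unfolding weak_king_def by auto
    moreover have "(Inl z, Inr (f y)) \<in> A2" using z y zy unfolding A2_def by auto
    moreover have "(y, z) \<notin> A" using z og(4) by auto
    moreover have "\<forall>y'\<in>V. f y' = f y \<longrightarrow> y' = y" using inj y by (auto dest: inj_onD)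
    moreover have "\<And>a b. (a, b) \<in> A \<Longrightarrow> a \<in> V" using og(2) by auto
    ultimately show False
      unfolding weakly_reach2_def arc10_def arc00_def A2_def by auto
  qed
  have "{u \<in> V2. weak_king V2 A2 u} = Inl ` V"
  proof
    show "{u \<in> V2. weak_king V2 A2 u} \<subseteq> Inl ` V"
      using k2 unfolding V2_def by auto
    show "Inl ` V \<subseteq> {u \<in> V2. weak_king V2 A2 u}"
      using k1 unfolding V2_def by auto
  qed
  then show ?thesis using o2 ind unfolding V2_def by blast
qed

end
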